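(* If $\varphi\in\mathrm{sHML}_F$ (resp. $\varphi\in\mathrm{cHML}_F$) is closed, then there is some $\psi\in\mathrm{sHML}$ (resp. $\psi\in\mathrm{cHML}$) such that $[\![\psi]\!]_F=[\![\varphi]\!]_F$.
   Context: Fix a finite set $\mathrm{Act}$ of actions. recHML formulae: $\varphi::=\mathrm{tt}\mid\mathrm{ff}\mid\varphi\vee\varphi\mid\varphi\wedge\varphi\mid\langle A\rangle\varphi\mid[A]\varphi\mid\min X.\varphi\mid\max X.\varphi\mid X$ ($A\subseteq\mathrm{Act}$), guarded. Fragments: $\mathrm{sHML}_F$: $\varphi::=\mathrm{tt}\mid\mathrm{ff}\mid[A]\varphi\mid\varphi\vee\varphi\mid\varphi\wedge\varphi\mid\max X.\varphi\mid X$; $\mathrm{cHML}_F$: $\varphi::=\mathrm{tt}\mid\mathrm{ff}\mid\langle A\rangle\varphi\mid\varphi\vee\varphi\mid\varphi\wedge\varphi\mid\min X.\varphi\mid X$; $\mathrm{sHML}$: $\varphi::=\mathrm{tt}\mid\mathrm{ff}\mid[A]\varphi\mid\varphi\wedge\varphi\mid\max X.\varphi\mid X$; $\mathrm{cHML}$: $\varphi::=\mathrm{tt}\mid\mathrm{ff}\mid\langle A\rangle\varphi\mid\varphi\vee\varphi\mid\min X.\varphi\mid X$. Finfinite traces $\mathrm{Fin}=\mathrm{Act}^\omega\cup\mathrm{Act}^*$; finfinite semantics: $[\![\mathrm{tt}]\!]_F=\mathrm{Fin}$, $[\![\mathrm{ff}]\!]_F=\emptyset$, $\vee,\wedge$ union/intersection,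 $[\![\langle A\rangle\varphi,\sigma]\!]_F=\{ag\mid a\in A,g\in[\![\varphi,\sigma]\!]_F\}$, $[\![[A]\varphi,\sigma]\!]_F=\{g\mid\forall a\in A,\forall g'.\ g=ag'\Rightarrow g'\in[\![\varphi,\sigma]\!]_F\}$, $\min/\max$ as least/greatest fixpoints, $[\![X,\sigma]\!]_F=\sigma(X)$. *)

theory Defs
  imports Main
begin

datatype 'a fintr = FinT "'a list" | InfT "nat \<Rightarrow> 'a"

fun tcons :: "'a \<Rightarrow> 'a fintr \<Rightarrow> 'a fintr" where
  "tcons a (FinT l) = FinT (a # l)"
| "tcons a (InfT f) = InfT (case_nat a f)"

datatype 'a form =
    TT | FF
  | Or "'a form" "'a form"
  | And "'a form" "'a form"
  | Dia "'a set" "'a form"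
  | Box "'a set" "'a form"
  | Min nat "'a form"
  | Max nat "'a form"
  | Var nat

primrec sem :: "'a form \<Rightarrow> (nat \<Rightarrow> 'a fintr set) \<Rightarrow> 'a fintr set" where
  "sem TT \<sigma> = UNIV"
| "sem FF \<sigma> = {}"
| "sem (Or p q) \<sigma> = sem p \<sigma> \<union> sem q \<sigma>"
| "sem (And p q) \<sigma> = sem p \<sigma> \<inter> sem q \<sigma>"
| "sem (Dia A p) \<sigma> = {tcons a g | a g. a \<in> A \<and> g \<in> sem p \<sigma>}"
| "sem (Box A p) \<sigma> = {g. \<forall>a\<in>A. \<forall>g'. g = tcons a g' \<longrightarrow> g' \<in> sem p \<sigma>}"
| "sem (Min X p) \<sigma> = lfp (\<lambda>S. sem p (\<sigma>(X := S)))"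
| "sem (Max X p) \<sigma> = gfp (\<lambda>S. sem p (\<sigma>(X := S)))"
| "sem (Var X) \<sigma> = \<sigma> X"

primrec fv :: "'a form \<Rightarrow> nat set" where
  "fv TT = {}" | "fv FF = {}"
| "fv (Or p q) = fv p \<union> fv q" | "fv (And p q) = fv p \<union> fv q"
| "fv (Dia A p) = fv p" | "fv (Box A p) = fv p"
| "fv (Min X p) = fv p - {X}" | "fv (Max X p) = fv p - {X}"
| "fv (Var X) = {X}"

definition closed :: "'a form \<Rightarrow> bool" where
  "closed p \<longleftrightarrow> fv p = {}"

primrec guarded_var :: "nat \<Rightarrow> 'a form \<Rightarrow> bool" where
  "guarded_var X TT = True" | "guarded_var X FF = True"
| "guarded_var X (Or p q) = (guarded_var X p \<and> guarded_var X q)"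
| "guarded_var X (And p q) = (guarded_var X p \<and> guarded_var X q)"
| "guarded_var X (Dia A p) = True" | "guarded_var X (Box A p) = True"
| "guarded_var X (Min Y p) = (Y = X \<or> guarded_var X p)"
| "guarded_var X (Max Y p) = (Y = X \<or> guarded_var X p)"
| "guarded_var X (Var Y) = (Y \<noteq> X)"

primrec guarded :: "'a form \<Rightarrow> bool" where
  "guarded TT = True" | "guarded FF = True"
| "guarded (Or p q) = (guarded p \<and> guarded q)"
| "guarded (And p q) = (guarded p \<and> guarded q)"
| "guarded (Dia A p) = guarded p" | "guarded (Box A p) = guarded p"
| "guarded (Min X p) = (guarded_var X p \<and> guarded p)"
| "guarded (Max X p) = (guarded_var X p \<and> guarded p)"
| "guarded (Var X) = True"

primrec sHML_F :: "'a form \<Rightarrow> bool" where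
  "sHML_F TT = True" | "sHML_F FF = True"
| "sHML_F (Or p q) = (sHML_F p \<and> sHML_F q)"
| "sHML_F (And p q) = (sHML_F p \<and> sHML_F q)"
| "sHML_F (Dia A p) = False" | "sHML_F (Box A p) = sHML_F p"
| "sHML_F (Min X p) = False" | "sHML_F (Max X p) = sHML_F p"
| "sHML_F (Var X) = True"

primrec cHML_F :: "'a form \<Rightarrow> bool" where
  "cHML_F TT = True" | "cHML_F FF = True"
| "cHML_F (Or p q) = (cHML_F p \<and> cHML_F q)"
| "cHML_F (And p q) = (cHML_F p \<and> cHML_F q)"
| "cHML_F (Dia A p) = cHML_F p" | "cHML_F (Box A p) = False"
| "cHML_F (Min X p) = cHML_F p" | "cHML_F (Max X p) = False"
| "cHML_F (Var X) = True"

primrec sHML :: "'a form \<Rightarrow> bool" where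
  "sHML TT = True" | "sHML FF = True"
| "sHML (Or p q) = False"
| "sHML (And p q) = (sHML p \<and> sHML q)"
| "sHML (Dia A p) = False" | "sHML (Box A p) = sHML p"
| "sHML (Min X p) = False" | "sHML (Max X p) = sHML p"
| "sHML (Var X) = True"

primrec cHML :: "'a form \<Rightarrow> bool" where
  "cHML TT = True" | "cHML FF = True"
| "cHML (Or p q) = (cHML p \<and> cHML q)"
| "cHML (And p q) = False"
| "cHML (Dia A p) = cHML p" | "cHML (Box A p) = False"
| "cHML (Min X p) = cHML p" | "cHML (Max X p) = False"
| "cHML (Var X) = True"

text \<open>Semantics of closed formulae (the environment is irrelevant for them).\<close>
definition semF :: "'a form \<Rightarrow> 'a fintr set" where
  "semF p = sem p (\<lambda>_. {})"

end

theory Submission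
  imports Defs
begin


definition D :: "'a \<Rightarrow> 'a fintr set \<Rightarrow> 'a fintr set" where
  "D a S = {g. tcons a g \<in> S}"

definition app :: "'a list \<Rightarrow> 'a fintr \<Rightarrow> 'a fintr" where
  "app w g = foldr tcons w g"

definition Dw :: "'a list \<Rightarrow> 'a fintr set \<Rightarrow> 'a fintr set" where
  "Dw w S = {g. app w g \<in> S}"

fun pre :: "nat \<Rightarrow> 'a fintr \<Rightarrow> 'a list" where
  "pre k (FinT l) = take k l"
| "pre k (InfT f) = map f [0..<k]"

definition ok :: "nat \<Rightarrow> 'a fintr set \<Rightarrow> 'a fintr set" where
  "ok k S = {g. Dw (pre k g) S \<noteq> {}}"

definition eps :: "'a fintr set \<Rightarrow> bool" where
  "eps S \<longleftrightarrow> (S \<noteq> {} \<longrightarrow> FinT [] \<in> S)"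

definition safe :: "'a fintr set \<Rightarrow> bool" where
  "safe S \<longleftrightarrow> (\<forall>f. (\<forall>n. Dw (map f [0..<n]) S \<noteq> {}) \<longrightarrow> InfT f \<in> S)"

lemma case_nat_inj: "case_nat a f = case_nat b f' \<longleftrightarrow> a = b \<and> f = f'"
proof
  assume h: "case_nat a f = case_nat b f'"
  have "a = b" using fun_cong[OF h, of 0] by simp
  moreover have "f = f'"
  proof
    fix x show "f x = f' x" using fun_cong[OF h, of "Suc x"] by simp
  qed
  ultimately show "a = b \<and> f = f'" ..
qed simp

lemma tcons_inj[simp]: "tcons a g = tcons b g' \<longleftrightarrow> a = b \<and> g = g'"
proof (cases g; cases g')
  fix f f' assume "g = InfT f" "g' = InfT f'"
  then show ?thesis
    by (auto simp: case_nat_inj)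
qed auto

lemma tcons_ne_Nil[simp]: "tcons a g \<noteq> FinT []" "FinT [] \<noteq> tcons a g"
  by (cases g; simp)+

lemma tcons_InfT: "tcons a g = InfT f \<longleftrightarrow> a = f 0 \<and> g = InfT (f \<circ> Suc)"
  by (cases g) (auto simp: fun_eq_iff split: nat.splits)

lemma tcons_FinT: "tcons a g = FinT l \<longleftrightarrow> (\<exists>l'. l = a # l' \<and> g = FinT l')"
  by (cases g) auto

lemma InfT_split: "InfT f = tcons (f 0) (InfT (f \<circ> Suc))"
  by (simp add: tcons_InfT) (rule ext, simp split: nat.split)

lemma Dw_Nil[simp]: "Dw [] S = S" by (simp add: Dw_def app_def)
lemma Dw_Cons[simp]: "Dw (a # w) S = Dw w (D a S)" by (simp add: Dw_def app_def D_def)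
lemma Dw_append: "Dw (u @ v) S = Dw v (Dw u S)" by (simp add: Dw_def app_def)
lemma Dw_empty[simp]: "Dw w {} = {}" by (simp add: Dw_def)
lemma Dw_Un: "Dw w (S \<union> T) = Dw w S \<union> Dw w T" by (auto simp: Dw_def)
lemma Dw_Int: "Dw w (S \<inter> T) = Dw w S \<inter> Dw w T" by (auto simp: Dw_def)
lemma Dw_mono: "S \<subseteq> T \<Longrightarrow> Dw w S \<subseteq> Dw w T" by (auto simp: Dw_def)
lemma D_Un: "D a (S \<union> T) = D a S \<union> D a T" by (auto simp: D_def)
lemma D_Int: "D a (S \<inter> T) = D a S \<inter> D a T" by (auto simp: D_def)

lemma pre_Suc_Inf: "pre (Suc n) (InfT f) = f 0 # pre n (InfT (f \<circ> Suc))"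
  by (simp add: map_upt_Suc del: upt_Suc)

lemma pre_prefix: "j \<le> k \<Longrightarrow> \<exists>v. pre k g = pre j g @ v"
proof (cases g)
  case (FinT l)
  assume "j \<le> k"
  then have "take k l = take j l @ drop j (take k l)"
    by (metis append_take_drop_id min.absorb1 take_take)
  then show ?thesis using FinT by auto
next
  case (InfT f)
  assume "j \<le> k"
  then have "[0..<k] = [0..<j] @ [j..<k]" by (metis le0 upt_add_eq_append le_add_diff_inverse)
  then show ?thesis using InfT by auto
qed

lemma Dw_prefix_ne: "Dw (u @ v) S \<noteq> {} \<Longrightarrow> Dw u S \<noteq> {}"
  by (auto simp: Dw_append)

lemma ok_mono: "j \<le> k \<Longrightarrow> ok k T \<subseteq> ok j T"
proof
  fix g assume j: "j \<le> k" and g: "g \<in> ok k T"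
  obtain v where "pre k g = pre j g @ v" using pre_prefix[OF j] by blast
  then show "g \<in> ok j T" using g Dw_prefix_ne[of "pre j g" v T] by (simp add: ok_def)
qed

lemma app_FinT_Nil: "app l (FinT []) = FinT l"
  by (induction l) (auto simp: app_def)

lemma app_InfT: "app w g = InfT h \<Longrightarrow> w = map h [0..<length w]"
proof (induction w arbitrary: g h)
  case (Cons a w)
  then have "tcons a (app w g) = InfT h" by (simp add: app_def)
  then have "a = h 0" "app w g = InfT (h \<circ> Suc)" by (auto simp: tcons_InfT)
  have "w = map (h \<circ> Suc) [0..<length w]" using Cons.IH \<open>app w g = InfT (h \<circ> Suc)\<close> by blast
  moreover have "map (h \<circ> Suc) [0..<length w] = map (\<lambda>i. h (Suc i)) [0..<length w]" by (simp add: comp_def)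
  ultimately show ?case using \<open>a = h 0\<close> unfolding length_Cons map_upt_Suc by metis
qed simp




lemma sem_mono: "(\<And>X. \<sigma> X \<subseteq> \<sigma>' X) \<Longrightarrow> sem p \<sigma> \<subseteq> sem p \<sigma>'"
proof (induction p arbitrary: \<sigma> \<sigma>')
  case (Or p q)
  then have "sem p \<sigma> \<subseteq> sem p \<sigma>'" "sem q \<sigma> \<subseteq> sem q \<sigma>'" by blast+
  then show ?case by auto
next
  case (And p q)
  then have "sem p \<sigma> \<subseteq> sem p \<sigma>'" "sem q \<sigma> \<subseteq> sem q \<sigma>'" by blast+
  then show ?case by auto
next
  case (Dia A p) then show ?case by simp blast
next
  case (Box A p) then show ?case by simp blast
next
  case (Min X p)
  then show ?case by simp (rule lfp_mono, rule Min.IH, simp)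
next
  case (Max X p)
  then show ?case by simp (rule gfp_mono, rule Max.IH, simp)
qed auto

lemma mono_sem: "mono (\<lambda>S. sem p (\<sigma>(X := S)))"
  by (rule monoI) (rule sem_mono, simp)

lemma sem_Max_unfold: "sem (Max X p) \<sigma> = sem p (\<sigma>(X := sem (Max X p) \<sigma>))"
  by (simp add: gfp_unfold[OF mono_sem, symmetric])

lemma sem_fv: "(\<And>X. X \<in> fv p \<Longrightarrow> \<sigma> X = \<sigma>' X) \<Longrightarrow> sem p \<sigma> = sem p \<sigma>'"
proof (induction p arbitrary: \<sigma> \<sigma>')
  case (Or p q)
  have "sem p \<sigma> = sem p \<sigma>'" "sem q \<sigma> = sem q \<sigma>'" by (rule Or.IH; use Or.prems in simp)+
  then show ?case by simp
next
  case (And p q)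
  have "sem p \<sigma> = sem p \<sigma>'" "sem q \<sigma> = sem q \<sigma>'" by (rule And.IH; use And.prems in simp)+
  then show ?case by simp
next
  case (Dia A p)
  have "sem p \<sigma> = sem p \<sigma>'" by (rule Dia.IH; use Dia.prems in simp)
  then show ?case by simp
next
  case (Box A p)
  have "sem p \<sigma> = sem p \<sigma>'" by (rule Box.IH; use Box.prems in simp)
  then show ?case by simp
next
  case (Min X p)
  have "\<And>S. sem p (\<sigma>(X := S)) = sem p (\<sigma>'(X := S))" by (rule Min.IH) (use Min.prems in auto)
  then show ?case by simp
next
  case (Max X p)
  have "\<And>S. sem p (\<sigma>(X := S)) = sem p (\<sigma>'(X := S))" by (rule Max.IH) (use Max.prems in auto)
  then show ?case by simp
next
  case (Var X) then show ?case by simp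
qed simp_all

lemma D_Box: "D a (sem (Box A p) \<tau>) = (if a \<in> A then sem p \<tau> else UNIV)"
  by (auto simp: D_def)

lemma eps_sem: "(\<And>X. eps (\<sigma> X)) \<Longrightarrow> sHML_F p \<Longrightarrow> eps (sem p \<sigma>)"
proof (induction p arbitrary: \<sigma>)
  case (Max X p)
  let ?f = "\<lambda>S. sem p (\<sigma>(X := S))"
  let ?G = "gfp ?f"
  have "insert (FinT []) ?G \<subseteq> ?G" if ne: "?G \<noteq> {}"
  proof -
    have e: "eps (?f (insert (FinT []) ?G))"
      by (rule Max.IH) (use Max.prems in \<open>auto simp: eps_def\<close>)
    have "?G \<subseteq> ?f (insert (FinT []) ?G)"
      by (subst gfp_unfold[OF mono_sem]) (rule sem_mono, auto)
    then have "insert (FinT []) ?G \<subseteq> ?f (insert (FinT []) ?G)" using e ne unfolding eps_def by auto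
    then show ?thesis by (rule gfp_upperbound)
  qed
  then show ?case by (auto simp: eps_def)
qed (auto simp: eps_def)

lemma Dw_ne_mono: "m \<le> n \<Longrightarrow> Dw (map f [0..<n]) S \<noteq> {} \<Longrightarrow> Dw (map f [0..<m]) S \<noteq> {}"
  using pre_prefix[of m n "InfT f"] Dw_prefix_ne by fastforce

lemma safe_Un: "safe S \<Longrightarrow> safe T \<Longrightarrow> safe (S \<union> T)"
  unfolding safe_def
proof (intro allI impI)
  fix f assume sS: "\<forall>f. (\<forall>n. Dw (map f [0..<n]) S \<noteq> {}) \<longrightarrow> InfT f \<in> S"
    and sT: "\<forall>f. (\<forall>n. Dw (map f [0..<n]) T \<noteq> {}) \<longrightarrow> InfT f \<in> T"
    and h: "\<forall>n. Dw (map f [0..<n]) (S \<union> T) \<noteq> {}"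
  show "InfT f \<in> S \<union> T"
  proof (cases "\<forall>n. Dw (map f [0..<n]) S \<noteq> {}")
    case True then show ?thesis using sS by auto
  next
    case False
    then obtain n0 where n0: "Dw (map f [0..<n0]) S = {}" by auto
    have "Dw (map f [0..<n]) T \<noteq> {}" for n
    proof -
      have "Dw (map f [0..<max n n0]) S = {}" using n0 Dw_ne_mono[of n0 "max n n0" f S] by auto
      then have "Dw (map f [0..<max n n0]) T \<noteq> {}" using h[rule_format, of "max n n0"] by (auto simp: Dw_Un)
      then show ?thesis using Dw_ne_mono[of n "max n n0" f T] by auto
    qed
    then show ?thesis using sT by auto
  qed
qed

lemma safe_Int: "safe S \<Longrightarrow> safe T \<Longrightarrow> safe (S \<inter> T)"
  unfolding safe_def Dw_Int by blast

lemma safe_UNIV: "safe UNIV" by (simp add: safe_def)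
lemma safe_empty: "safe {}" by (simp add: safe_def)
lemma eps_UNIV: "eps UNIV" by (simp add: eps_def)
lemma eps_empty: "eps {}" by (simp add: eps_def)
lemma eps_Un: "eps S \<Longrightarrow> eps T \<Longrightarrow> eps (S \<union> T)" by (auto simp: eps_def)
lemma eps_Int: "eps S \<Longrightarrow> eps T \<Longrightarrow> eps (S \<inter> T)" by (auto simp: eps_def)

lemma D_Box_self: "a \<in> A \<Longrightarrow> D a {g. \<forall>b\<in>A. \<forall>g'. g = tcons b g' \<longrightarrow> g' \<in> S} = S"
  by (auto simp: D_def)

lemma safe_Box: "safe S \<Longrightarrow> safe {g. \<forall>b\<in>A. \<forall>g'. g = tcons b g' \<longrightarrow> g' \<in> S}"
  unfolding safe_def
proof (intro allI impI)
  fix f assume sS: "\<forall>f. (\<forall>n. Dw (map f [0..<n]) S \<noteq> {}) \<longrightarrow> InfT f \<in> S"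
    and h: "\<forall>n. Dw (map f [0..<n]) {g. \<forall>b\<in>A. \<forall>g'. g = tcons b g' \<longrightarrow> g' \<in> S} \<noteq> {}"
  show "InfT f \<in> {g. \<forall>b\<in>A. \<forall>g'. g = tcons b g' \<longrightarrow> g' \<in> S}"
  proof (cases "f 0 \<in> A")
    case True
    have "Dw (map (f \<circ> Suc) [0..<n]) S \<noteq> {}" for n
    proof -
      have "Dw (map f [0..<Suc n]) {g. \<forall>b\<in>A. \<forall>g'. g = tcons b g' \<longrightarrow> g' \<in> S} \<noteq> {}" using h by blast
      moreover have "map f [0..<Suc n] = f 0 # map (f \<circ> Suc) [0..<n]"
        using pre_Suc_Inf[of n f] by simp
      ultimately show ?thesis using D_Box_self[OF True, of S] by simp
    qed
    then have "InfT (f \<circ> Suc) \<in> S" using sS by blast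
    then show ?thesis by (auto simp: eq_commute[of "InfT f"] tcons_InfT)
  next
    case False
    then show ?thesis by (auto simp: eq_commute[of "InfT f"] tcons_InfT)
  qed
qed

lemma safe_sem: "(\<And>X. safe (\<sigma> X)) \<Longrightarrow> sHML_F p \<Longrightarrow> safe (sem p \<sigma>)"
proof (induction p arbitrary: \<sigma>)
  case (Or p q) then show ?case by (simp add: safe_Un)
next
  case (And p q) then show ?case by (simp add: safe_Int)
next
  case (Box A p) then show ?case by (simp add: safe_Box)
next
  case (Max X p)
  let ?f = "\<lambda>S. sem p (\<sigma>(X := S))"
  let ?G = "gfp ?f"
  let ?C = "?G \<union> {InfT h |h. \<forall>n. Dw (map h [0..<n]) ?G \<noteq> {}}"
  have sC: "safe ?C"
    unfolding safe_def
  proof (intro allI impI)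
    fix h assume hh: "\<forall>n. Dw (map h [0..<n]) ?C \<noteq> {}"
    have "Dw (map h [0..<n]) ?G \<noteq> {}" for n
    proof -
      obtain g where g: "app (map h [0..<n]) g \<in> ?C" using hh[rule_format, of n] by (auto simp: Dw_def)
      show ?thesis
      proof (cases "app (map h [0..<n]) g \<in> ?G")
        case True then show ?thesis by (auto simp: Dw_def)
      next
        case False
        then obtain h' where h': "app (map h [0..<n]) g = InfT h'" and a: "\<forall>n. Dw (map h' [0..<n]) ?G \<noteq> {}"
          using g by auto
        have "map h [0..<n] = map h' [0..<n]" using app_InfT[OF h'] by simp
        then show ?thesis using a by metis
      qed
    qed
    then show "InfT h \<in> ?C" by auto
  qed
  have sf: "safe (?f ?C)" by (rule Max.IH) (use Max.prems sC in auto)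
  have G: "?G \<subseteq> ?f ?C"
    by (subst gfp_unfold[OF mono_sem]) (rule sem_mono, auto)
  have "?C \<subseteq> ?f ?C"
  proof
    fix x assume "x \<in> ?C"
    then show "x \<in> ?f ?C"
    proof
      assume "x \<in> ?G" then show ?thesis using G by auto
    next
      assume "x \<in> {InfT h |h. \<forall>n. Dw (map h [0..<n]) ?G \<noteq> {}}"
      then obtain h where x: "x = InfT h" and a: "\<forall>n. Dw (map h [0..<n]) ?G \<noteq> {}" by auto
      have "\<forall>n. Dw (map h [0..<n]) (?f ?C) \<noteq> {}" using a Dw_mono[OF G] by blast
      then show ?thesis using sf x by (auto simp: safe_def)
    qed
  qed
  then have "?C \<subseteq> ?G" by (rule gfp_upperbound)
  then have eq: "?C = ?G" by (rule antisym) (rule Un_upper1)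
  have "safe ?G" using sC unfolding eq .
  then show ?case by (simp only: sem.simps)
qed (simp_all add: safe_UNIV safe_empty)




type_synonym 'a env = "nat \<Rightarrow> 'a fintr set"

primrec R :: "'a form \<Rightarrow> 'a env \<Rightarrow> ('a form \<times> 'a env) set" where
  "R TT \<rho> = {(TT, \<rho>)}"
| "R FF \<rho> = {(FF, \<rho>)}"
| "R (Or p q) \<rho> = insert (Or p q, \<rho>) (R p \<rho> \<union> R q \<rho>)"
| "R (And p q) \<rho> = insert (And p q, \<rho>) (R p \<rho> \<union> R q \<rho>)"
| "R (Dia A p) \<rho> = insert (Dia A p, \<rho>) (R p \<rho>)"
| "R (Box A p) \<rho> = insert (Box A p, \<rho>) (R p \<rho>)"
| "R (Min X p) \<rho> = insert (Min X p, \<rho>) (R p (\<rho>(X := sem (Min X p) \<rho>)))"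
| "R (Max X p) \<rho> = insert (Max X p, \<rho>) (R p (\<rho>(X := sem (Max X p) \<rho>)))"
| "R (Var X) \<rho> = {(Var X, \<rho>)}"

lemma R_self: "(p, \<rho>) \<in> R p \<rho>"
  by (cases p) auto

lemma R_finite: "finite (R p \<rho>)"
  by (induction p arbitrary: \<rho>) auto

lemma R_trans: "(q, \<tau>) \<in> R p \<rho> \<Longrightarrow> R q \<tau> \<subseteq> R p \<rho>"
  by (induction p arbitrary: \<rho>) auto

lemma R_sHML_F: "(q, \<tau>) \<in> R p \<rho> \<Longrightarrow> sHML_F p \<Longrightarrow> sHML_F q"
  by (induction p arbitrary: \<rho>) auto

lemma R_guarded: "(q, \<tau>) \<in> R p \<rho> \<Longrightarrow> guarded p \<Longrightarrow> guarded q"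
  by (induction p arbitrary: \<rho>) auto

lemma R_env:
  assumes pres: "\<And>\<sigma> q. (\<And>X. P (\<sigma> X)) \<Longrightarrow> sHML_F q \<Longrightarrow> P (sem q \<sigma>)"
  shows "(q, \<tau>) \<in> R p \<rho> \<Longrightarrow> sHML_F p \<Longrightarrow> (\<And>X. P (\<rho> X)) \<Longrightarrow> P (\<tau> X)"
proof (induction p arbitrary: \<rho>)
  case (Max Y p)
  show ?case
  proof (cases "(q, \<tau>) = (Max Y p, \<rho>)")
    case True then show ?thesis using Max.prems by auto
  next
    case False
    then have "(q, \<tau>) \<in> R p (\<rho>(Y := sem (Max Y p) \<rho>))" using Max.prems by auto
    moreover have "P (sem (Max Y p) \<rho>)" using pres Max.prems by blast
    ultimately show ?thesis using Max.IH Max.prems by auto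
  qed
qed auto

primrec isbox :: "'a form \<Rightarrow> bool" where
  "isbox TT = False" | "isbox FF = False" | "isbox (Or p q) = False" | "isbox (And p q) = False"
| "isbox (Dia A p) = False" | "isbox (Box A p) = True" | "isbox (Min X p) = False"
| "isbox (Max X p) = False" | "isbox (Var X) = False"

definition boxset :: "('a form \<times> 'a env) set \<Rightarrow> 'a fintr set set" where
  "boxset S = (\<lambda>(q, \<tau>). sem q \<tau>) ` {x \<in> S. isbox (fst x)}"

lemma boxset_mono: "S \<subseteq> T \<Longrightarrow> boxset S \<subseteq> boxset T"
  unfolding boxset_def by blast

lemma boxset_finite: "finite S \<Longrightarrow> finite (boxset S)"
  unfolding boxset_def by simp

inductive_set Lat :: "'b set set \<Rightarrow> 'b set set" for B where
  gen: "x \<in> B \<Longrightarrow> x \<in> Lat B"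
| univ: "UNIV \<in> Lat B"
| empty: "{} \<in> Lat B"
| un: "x \<in> Lat B \<Longrightarrow> y \<in> Lat B \<Longrightarrow> x \<union> y \<in> Lat B"
| int: "x \<in> Lat B \<Longrightarrow> y \<in> Lat B \<Longrightarrow> x \<inter> y \<in> Lat B"

lemma Lat_repr: "x \<in> Lat B \<Longrightarrow> \<exists>Q. Q \<subseteq> Pow B \<and> x = \<Union> (Inter ` Q)"
proof (induction rule: Lat.induct)
  case (gen x) then show ?case by (intro exI[of _ "{{x}}"]) auto
next
  case univ then show ?case by (intro exI[of _ "{{}}"]) auto
next
  case empty then show ?case by (intro exI[of _ "{}"]) auto
next
  case (un x y)
  then obtain Q1 Q2 where "Q1 \<subseteq> Pow B" "x = \<Union> (Inter ` Q1)" "Q2 \<subseteq> Pow B" "y = \<Union> (Inter ` Q2)" by blast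
  then show ?case by (intro exI[of _ "Q1 \<union> Q2"]) auto
next
  case (int x y)
  then obtain Q1 Q2 where q: "Q1 \<subseteq> Pow B" "x = \<Union> (Inter ` Q1)" "Q2 \<subseteq> Pow B" "y = \<Union> (Inter ` Q2)" by blast
  let ?Q = "{a \<union> b |a b. a \<in> Q1 \<and> b \<in> Q2}"
  have "x \<inter> y = \<Union> (Inter ` ?Q)"
  proof
    show "x \<inter> y \<subseteq> \<Union> (Inter ` ?Q)"
    proof
      fix z assume "z \<in> x \<inter> y"
      then obtain a b where "a \<in> Q1" "b \<in> Q2" "z \<in> \<Inter> a" "z \<in> \<Inter> b" using q by auto
      then show "z \<in> \<Union> (Inter ` ?Q)" by (intro UnionI[of "\<Inter>(a \<union> b)"]) auto
    qed
  next
    show "\<Union> (Inter ` ?Q) \<subseteq> x \<inter> y" using q by auto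
  qed
  moreover have "?Q \<subseteq> Pow B" using q by auto
  ultimately show ?case by blast
qed

lemma Lat_finite: "finite B \<Longrightarrow> finite (Lat B)"
proof -
  assume f: "finite B"
  have "Lat B \<subseteq> (\<lambda>Q. \<Union> (Inter ` Q)) ` Pow (Pow B)"
  proof
    fix x assume "x \<in> Lat B"
    then obtain Q where "Q \<subseteq> Pow B" "x = \<Union> (Inter ` Q)" using Lat_repr by metis
    then show "x \<in> (\<lambda>Q. \<Union> (Inter ` Q)) ` Pow (Pow B)" by (intro image_eqI) auto
  qed
  moreover have "finite (Pow (Pow B))" using f by (simp only: finite_Pow_iff)
  then have "finite ((\<lambda>Q. \<Union> (Inter ` Q)) ` Pow (Pow B))" by (rule finite_imageI)
  ultimately show ?thesis by (rule finite_subset)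
qed

lemma Lat_pres:
  assumes "\<And>x. x \<in> B \<Longrightarrow> P x" "P UNIV" "P {}" "\<And>x y. P x \<Longrightarrow> P y \<Longrightarrow> P (x \<union> y)"
    "\<And>x y. P x \<Longrightarrow> P y \<Longrightarrow> P (x \<inter> y)"
  shows "x \<in> Lat B \<Longrightarrow> P x"
  by (induction rule: Lat.induct) (use assms in auto)

lemma Lat_D:
  assumes "\<And>x. x \<in> B \<Longrightarrow> D a x \<in> Lat B"
  shows "x \<in> Lat B \<Longrightarrow> D a x \<in> Lat B"
proof (induction rule: Lat.induct)
  case (gen x) then show ?case using assms by blast
next
  case univ then show ?case by (simp add: D_def Lat.univ)
next
  case empty then show ?case by (simp add: D_def Lat.empty)
next
  case (un x y) then show ?case by (simp add: D_Un Lat.un)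
next
  case (int x y) then show ?case by (simp add: D_Int Lat.int)
qed

primrec ug :: "'a form \<Rightarrow> nat set" where
  "ug TT = {}" | "ug FF = {}"
| "ug (Or p q) = ug p \<union> ug q" | "ug (And p q) = ug p \<union> ug q"
| "ug (Dia A p) = {}" | "ug (Box A p) = {}"
| "ug (Min X p) = ug p - {X}" | "ug (Max X p) = ug p - {X}"
| "ug (Var X) = {X}"

lemma ug_fv: "ug p \<subseteq> fv p"
  by (induction p) auto

lemma guarded_var_ug: "guarded_var X p \<Longrightarrow> X \<notin> ug p"
  by (induction p) auto

lemma ug_lemma:
  "sHML_F p \<Longrightarrow> guarded p \<Longrightarrow> boxset (R p \<rho>) \<subseteq> Bs \<Longrightarrow> (\<And>Y. Y \<in> ug p \<Longrightarrow> \<rho> Y \<in> Lat Bs)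
   \<Longrightarrow> sem p \<rho> \<in> Lat Bs"
proof (induction p arbitrary: \<rho>)
  case (Or p q)
  have "boxset (R p \<rho>) \<subseteq> Bs" "boxset (R q \<rho>) \<subseteq> Bs"
    using Or.prems(3) boxset_mono[of "R p \<rho>" "R (Or p q) \<rho>"] boxset_mono[of "R q \<rho>" "R (Or p q) \<rho>"] by auto
  then show ?case using Or by (auto intro: Lat.un)
next
  case (And p q)
  have "boxset (R p \<rho>) \<subseteq> Bs" "boxset (R q \<rho>) \<subseteq> Bs"
    using And.prems(3) boxset_mono[of "R p \<rho>" "R (And p q) \<rho>"] boxset_mono[of "R q \<rho>" "R (And p q) \<rho>"] by auto
  then show ?case using And by (auto intro: Lat.int)
next
  case (Box A p)
  have "sem (Box A p) \<rho> \<in> boxset (R (Box A p) \<rho>)" unfolding boxset_def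
    by (rule image_eqI[of _ _ "(Box A p, \<rho>)"]) auto
  then show ?case using Box.prems by (auto intro: Lat.gen)
next
  case (Max X p)
  let ?\<rho> = "\<rho>(X := sem (Max X p) \<rho>)"
  have "boxset (R p ?\<rho>) \<subseteq> Bs"
    using Max.prems(3) boxset_mono[of "R p ?\<rho>" "R (Max X p) \<rho>"] by auto
  moreover have "X \<notin> ug p" using Max.prems(2) guarded_var_ug by auto
  ultimately have "sem p ?\<rho> \<in> Lat Bs"
  proof (intro Max.IH)
    show "sHML_F p" "guarded p" using Max.prems by simp_all
    fix Y assume "Y \<in> ug p"
    moreover have "X \<notin> ug p" using Max.prems(2) guarded_var_ug by auto
    ultimately have "Y \<noteq> X" "Y \<in> ug (Max X p)" by auto
    then show "?\<rho> Y \<in> Lat Bs" using Max.prems(4) by simp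
  qed
  then show ?case using sem_Max_unfold by metis
qed (auto intro: Lat.intros)

lemma main_lemma:
  "sHML_F p \<Longrightarrow> guarded p \<Longrightarrow> boxset (R p \<rho>) \<subseteq> Bs \<Longrightarrow> (\<And>Y. Y \<in> fv p \<Longrightarrow> \<rho> Y \<in> Lat Bs)
   \<Longrightarrow> (q, \<tau>) \<in> R p \<rho> \<Longrightarrow> sem q \<tau> \<in> Lat Bs"
proof (induction p arbitrary: \<rho> q \<tau>)
  case (Or p1 p2)
  have b: "boxset (R p1 \<rho>) \<subseteq> Bs" "boxset (R p2 \<rho>) \<subseteq> Bs"
    using Or.prems(3) boxset_mono[of "R p1 \<rho>" "R (Or p1 p2) \<rho>"] boxset_mono[of "R p2 \<rho>" "R (Or p1 p2) \<rho>"] by auto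
  have i1: "sem q' \<tau>' \<in> Lat Bs" if "(q', \<tau>') \<in> R p1 \<rho>" for q' \<tau>'
    by (rule Or.IH(1)) (use Or.prems b that in auto)
  have i2: "sem q' \<tau>' \<in> Lat Bs" if "(q', \<tau>') \<in> R p2 \<rho>" for q' \<tau>'
    by (rule Or.IH(2)) (use Or.prems b that in auto)
  have "sem (Or p1 p2) \<rho> \<in> Lat Bs" using i1[OF R_self] i2[OF R_self] by (simp add: Lat.un)
  then show ?case using Or.prems(5) i1 i2 by auto
next
  case (And p1 p2)
  have b: "boxset (R p1 \<rho>) \<subseteq> Bs" "boxset (R p2 \<rho>) \<subseteq> Bs"
    using And.prems(3) boxset_mono[of "R p1 \<rho>" "R (And p1 p2) \<rho>"] boxset_mono[of "R p2 \<rho>" "R (And p1 p2) \<rho>"] by auto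
  have i1: "sem q' \<tau>' \<in> Lat Bs" if "(q', \<tau>') \<in> R p1 \<rho>" for q' \<tau>'
    by (rule And.IH(1)) (use And.prems b that in auto)
  have i2: "sem q' \<tau>' \<in> Lat Bs" if "(q', \<tau>') \<in> R p2 \<rho>" for q' \<tau>'
    by (rule And.IH(2)) (use And.prems b that in auto)
  have "sem (And p1 p2) \<rho> \<in> Lat Bs" using i1[OF R_self] i2[OF R_self] by (simp add: Lat.int)
  then show ?case using And.prems(5) i1 i2 by auto
next
  case (Box A p)
  have "sem (Box A p) \<rho> \<in> boxset (R (Box A p) \<rho>)" unfolding boxset_def
    by (rule image_eqI[of _ _ "(Box A p, \<rho>)"]) auto
  then have s: "sem (Box A p) \<rho> \<in> Lat Bs" using Box.prems by (auto intro: Lat.gen)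
  have b: "boxset (R p \<rho>) \<subseteq> Bs"
    using Box.prems(3) boxset_mono[of "R p \<rho>" "R (Box A p) \<rho>"] by auto
  have i1: "sem q' \<tau>' \<in> Lat Bs" if "(q', \<tau>') \<in> R p \<rho>" for q' \<tau>'
    by (rule Box.IH) (use Box.prems b that in auto)
  show ?case using Box.prems(5) i1 s by auto
next
  case (Max X p)
  let ?\<rho> = "\<rho>(X := sem (Max X p) \<rho>)"
  have M: "sem (Max X p) \<rho> \<in> Lat Bs"
  proof (rule ug_lemma)
    show "sHML_F (Max X p)" "guarded (Max X p)" "boxset (R (Max X p) \<rho>) \<subseteq> Bs" using Max.prems by auto
    fix Y assume "Y \<in> ug (Max X p)"
    then have "Y \<in> fv (Max X p)" using ug_fv by blast
    then show "\<rho> Y \<in> Lat Bs" using Max.prems(4) by blast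
  qed
  have b: "boxset (R p ?\<rho>) \<subseteq> Bs"
    using Max.prems(3) boxset_mono[of "R p ?\<rho>" "R (Max X p) \<rho>"] by auto
  have i1: "sem q' \<tau>' \<in> Lat Bs" if "(q', \<tau>') \<in> R p ?\<rho>" for q' \<tau>'
  proof (rule Max.IH)
    show "sHML_F p" "guarded p" using Max.prems by auto
    show "boxset (R p ?\<rho>) \<subseteq> Bs" by (rule b)
    show "(q', \<tau>') \<in> R p ?\<rho>" by (rule that)
    fix Y assume "Y \<in> fv p"
    then show "?\<rho> Y \<in> Lat Bs" using M Max.prems(4) by (cases "Y = X") auto
  qed
  show ?case using Max.prems(5) i1 M by auto
next
  case (Var X) then show ?case by simp
next
  case TT then show ?case by (simp add: Lat.univ)
next
  case FF then show ?case by (simp add: Lat.empty)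
qed simp_all




definition conjL :: "'a form list \<Rightarrow> 'a form" where
  "conjL xs = foldr And xs TT"

lemma sem_conj: "sem (conjL xs) \<sigma> = {g. \<forall>x\<in>set xs. g \<in> sem x \<sigma>}"
  unfolding conjL_def by (induction xs) auto

lemma sHML_conj: "(\<And>x. x \<in> set xs \<Longrightarrow> sHML x) \<Longrightarrow> sHML (conjL xs)"
  unfolding conjL_def by (induction xs) auto

lemma guarded_conj: "(\<And>x. x \<in> set xs \<Longrightarrow> guarded x) \<Longrightarrow> guarded (conjL xs)"
  unfolding conjL_def by (induction xs) auto

lemma guarded_var_conj: "(\<And>x. x \<in> set xs \<Longrightarrow> guarded_var X x) \<Longrightarrow> guarded_var X (conjL xs)"
  unfolding conjL_def by (induction xs) auto

lemma fv_conj: "fv (conjL xs) = (\<Union>x\<in>set xs. fv x)"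
  unfolding conjL_def by (induction xs) auto

primrec synt :: "nat \<Rightarrow> ('a fintr set \<Rightarrow> nat) \<Rightarrow> 'a list \<Rightarrow> 'a fintr set \<Rightarrow> 'a fintr set set \<Rightarrow> 'a form" where
  "synt 0 idx as S V = (if S = {} then FF else if S \<in> V then Var (idx S) else TT)"
| "synt (Suc n) idx as S V = (if S = {} then FF else if S \<in> V then Var (idx S) else
     Max (idx S) (conjL (map (\<lambda>a. Box {a} (synt n idx as (D a S) (insert S V))) as)))"

lemma synt_sHML: "sHML (synt n idx as S V)"
  by (induction n arbitrary: S V) (auto intro!: sHML_conj)

lemma synt_guarded: "guarded (synt n idx as S V)"
  by (induction n arbitrary: S V) (auto intro!: guarded_conj guarded_var_conj)

lemma synt_fv: "fv (synt n idx as S V) \<subseteq> idx ` V"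
proof (induction n arbitrary: S V)
  case (Suc n)
  show ?case using Suc.IH by (auto simp: fv_conj)
qed auto

lemma card_step: "finite Fam \<Longrightarrow> S \<in> Fam \<Longrightarrow> S \<notin> V \<Longrightarrow> card (Fam - V) \<le> Suc m
  \<Longrightarrow> card (Fam - insert S V) \<le> m"
proof -
  assume "finite Fam" "S \<in> Fam" "S \<notin> V" "card (Fam - V) \<le> Suc m"
  moreover have "Fam - insert S V = (Fam - V) - {S}" by auto
  ultimately show ?thesis by (simp add: card_Diff_singleton)
qed

lemma card_zero: "finite Fam \<Longrightarrow> S \<in> Fam \<Longrightarrow> card (Fam - V) \<le> 0 \<Longrightarrow> S \<in> V"
  by auto

lemma claim2:
  assumes fin: "finite Fam" and inj: "inj_on idx Fam" and DF: "\<And>S a. S \<in> Fam \<Longrightarrow> D a S \<in> Fam"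
  shows "card (Fam - V) \<le> n \<Longrightarrow> V \<subseteq> Fam \<Longrightarrow> S \<in> Fam \<Longrightarrow> (\<And>T. T \<in> V \<Longrightarrow> T \<subseteq> \<sigma> (idx T))
    \<Longrightarrow> S \<subseteq> sem (synt n idx as S V) \<sigma>"
proof (induction n arbitrary: S V \<sigma>)
  case 0
  then have "S \<in> V" using card_zero[OF fin] by blast
  then show ?case using 0 by auto
next
  case (Suc m)
  show ?case
  proof (cases "S = {} \<or> S \<in> V")
    case True then show ?thesis using Suc.prems by auto
  next
    case False
    let ?i = "idx S"
    let ?\<sigma> = "\<sigma>(?i := S)"
    have IH: "D a S \<subseteq> sem (synt m idx as (D a S) (insert S V)) ?\<sigma>" for a
    proof (rule Suc.IH)
      show "card (Fam - insert S V) \<le> m" using card_step[OF fin] Suc.prems False by blast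
      show "insert S V \<subseteq> Fam" "D a S \<in> Fam" using Suc.prems DF by auto
      fix T assume T: "T \<in> insert S V"
      show "T \<subseteq> ?\<sigma> (idx T)"
      proof (cases "T = S")
        case True then show ?thesis by simp
      next
        case False
        then have "idx T \<noteq> idx S" using inj T Suc.prems(2,3) by (meson inj_on_eq_iff insert_iff subsetD)
        then show ?thesis using Suc.prems(4) T False by simp
      qed
    qed
    have "S \<subseteq> sem (conjL (map (\<lambda>a. Box {a} (synt m idx as (D a S) (insert S V))) as)) ?\<sigma>"
      using IH by (auto simp: sem_conj D_def)
    then have "S \<subseteq> gfp (\<lambda>X. sem (conjL (map (\<lambda>a. Box {a} (synt m idx as (D a S) (insert S V))) as)) (\<sigma>(?i := X)))"
      by (rule gfp_upperbound)
    then show ?thesis using False by simp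
  qed
qed

lemma pre_zero[simp]: "pre 0 g = []"
  by (cases g) auto

lemma box_ok:
  assumes ne: "S \<noteq> {}" and h: "\<And>a g'. g = tcons a g' \<Longrightarrow> g' \<in> ok j (D a S)"
  shows "g \<in> ok (Suc j) S"
proof (cases g)
  case (FinT l)
  show ?thesis
  proof (cases l)
    case Nil then show ?thesis using FinT ne by (simp add: ok_def)
  next
    case (Cons a l')
    then have "g = tcons a (FinT l')" using FinT by simp
    then have "FinT l' \<in> ok j (D a S)" using h by blast
    then show ?thesis using FinT Cons by (simp add: ok_def)
  qed
next
  case (InfT f)
  then have "g = tcons (f 0) (InfT (f \<circ> Suc))" using InfT_split by simp
  then have "InfT (f \<circ> Suc) \<in> ok j (D (f 0) S)" using h by blast
  moreover have eq: "pre (Suc j) g = f 0 # pre j (InfT (f \<circ> Suc))" using InfT pre_Suc_Inf by simp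
  ultimately show ?thesis unfolding ok_def by (simp only: eq mem_Collect_eq Dw_Cons not_False_eq_True)
qed

lemma claim1:
  assumes fin: "finite Fam" and inj: "inj_on idx Fam" and DF: "\<And>S a. S \<in> Fam \<Longrightarrow> D a S \<in> Fam"
    and AS: "set as = UNIV"
  shows "card (Fam - V) \<le> n \<Longrightarrow> V \<subseteq> Fam \<Longrightarrow> S \<in> Fam \<Longrightarrow> (\<And>T. T \<in> V \<Longrightarrow> \<sigma> (idx T) \<subseteq> ok k T)
    \<Longrightarrow> sem (synt n idx as S V) \<sigma> \<subseteq> ok k S"
proof (induction n arbitrary: S V \<sigma> k)
  case 0
  then have "S \<in> V" using card_zero[OF fin] by blast
  then show ?case using 0 by auto
next
  case (Suc m)
  note oIH = Suc.IH and oP = Suc.prems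
  show ?case
  proof (cases "S = {} \<or> S \<in> V")
    case True then show ?thesis using Suc.prems by auto
  next
    case False
    let ?i = "idx S"
    let ?F = "\<lambda>X. sem (conjL (map (\<lambda>a. Box {a} (synt m idx as (D a S) (insert S V))) as)) (\<sigma>(?i := X))"
    let ?G = "gfp ?F"
    have "j \<le> k \<longrightarrow> ?G \<subseteq> ok j S" for j
    proof (induction j)
      case 0 then show ?case using False by (auto simp: ok_def)
    next
      case (Suc j)
      show ?case
      proof
        assume jk: "Suc j \<le> k"
        then have "j \<le> k" by simp
        then have Gj: "?G \<subseteq> ok j S" by (rule mp[OF Suc.IH])
        let ?\<sigma> = "\<sigma>(?i := ?G)"
        have IH: "sem (synt m idx as (D a S) (insert S V)) ?\<sigma> \<subseteq> ok j (D a S)" for a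
        proof (rule oIH)
          show "card (Fam - insert S V) \<le> m" using card_step[OF fin] oP False by blast
          show "insert S V \<subseteq> Fam" "D a S \<in> Fam" using oP DF by auto
          fix T assume T: "T \<in> insert S V"
          show "?\<sigma> (idx T) \<subseteq> ok j T"
          proof (cases "T = S")
            case True then show ?thesis using Gj by simp
          next
            case False
            then have "idx T \<noteq> idx S" using inj T oP(2,3) by (meson inj_on_eq_iff insert_iff subsetD)
            moreover have "ok k T \<subseteq> ok j T" using jk by (intro ok_mono) simp
            ultimately show ?thesis using oP(4) T False by fastforce
          qed
        qed
        have "?G = ?F ?G" by (rule gfp_unfold) (rule mono_sem)
        also have "\<dots> \<subseteq> ok (Suc j) S"
        proof
          fix g assume g: "g \<in> ?F ?G"
          show "g \<in> ok (Suc j) S"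
          proof (rule box_ok)
            show "S \<noteq> {}" using False by simp
            fix a g' assume "g = tcons a g'"
            moreover have "a \<in> set as" using AS by simp
            ultimately have "g' \<in> sem (synt m idx as (D a S) (insert S V)) ?\<sigma>" using g by (auto simp: sem_conj)
            then show "g' \<in> ok j (D a S)" using IH by blast
          qed
        qed
        finally show "?G \<subseteq> ok (Suc j) S" .
      qed
    qed
    then have "?G \<subseteq> ok k S" by simp
    then show ?thesis using False by simp
  qed
qed




primrec dual :: "'a form \<Rightarrow> 'a form" where
  "dual TT = FF" | "dual FF = TT"
| "dual (Or p q) = And (dual p) (dual q)" | "dual (And p q) = Or (dual p) (dual q)"
| "dual (Dia A p) = Box A (dual p)" | "dual (Box A p) = Dia A (dual p)"
| "dual (Min X p) = Max X (dual p)" | "dual (Max X p) = Min X (dual p)"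
| "dual (Var X) = Var X"

lemma gfp_dual:
  fixes f :: "'b set \<Rightarrow> 'b set"
  assumes m: "mono f"
  shows "gfp (\<lambda>S. - f (- S)) = - lfp f"
proof (rule antisym)
  let ?g = "\<lambda>S. - f (- S)"
  have mg: "mono ?g" using m by (auto simp: mono_def)
  have "?g (gfp ?g) = gfp ?g" by (rule gfp_unfold[OF mg, symmetric])
  then have "f (- gfp ?g) = - gfp ?g" by (metis double_compl)
  then have "lfp f \<le> - gfp ?g" by (intro lfp_lowerbound) simp
  then show "gfp ?g \<le> - lfp f" by blast
next
  let ?g = "\<lambda>S. - f (- S)"
  have "?g (- lfp f) = - lfp f" using lfp_unfold[OF m] by simp
  then show "- lfp f \<le> gfp ?g" by (intro gfp_upperbound) simp
qed

lemma lfp_dual: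
  fixes f :: "'b set \<Rightarrow> 'b set"
  assumes m: "mono f"
  shows "lfp (\<lambda>S. - f (- S)) = - gfp f"
proof -
  let ?g = "\<lambda>S. - f (- S)"
  have mg: "mono ?g" using m by (auto simp: mono_def)
  have "gfp (\<lambda>S. - ?g (- S)) = - lfp ?g" by (rule gfp_dual[OF mg])
  then show ?thesis by simp
qed

lemma sem_dual: "sem (dual p) \<sigma> = - sem p (\<lambda>X. - \<sigma> X)"
proof (induction p arbitrary: \<sigma>)
  case (Or p q) then show ?case by simp
next
  case (And p q) then show ?case by simp
next
  case (Dia A p) then show ?case by auto
next
  case (Box A p) then show ?case by auto
next
  case (Min X p)
  have e: "(\<lambda>Y. - (\<sigma>(X := S)) Y) = (\<lambda>Y. - \<sigma> Y)(X := - S)" for S by (rule ext) simp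
  have "sem (dual (Min X p)) \<sigma> = gfp (\<lambda>S. - sem p ((\<lambda>Y. - \<sigma> Y)(X := - S)))"
    by (simp only: dual.simps sem.simps Min.IH e)
  also have "\<dots> = - lfp (\<lambda>S. sem p ((\<lambda>Y. - \<sigma> Y)(X := S)))" by (rule gfp_dual[OF mono_sem])
  finally show ?case by simp
next
  case (Max X p)
  have e: "(\<lambda>Y. - (\<sigma>(X := S)) Y) = (\<lambda>Y. - \<sigma> Y)(X := - S)" for S by (rule ext) simp
  have "sem (dual (Max X p)) \<sigma> = lfp (\<lambda>S. - sem p ((\<lambda>Y. - \<sigma> Y)(X := - S)))"
    by (simp only: dual.simps sem.simps Max.IH e)
  also have "\<dots> = - gfp (\<lambda>S. sem p ((\<lambda>Y. - \<sigma> Y)(X := S)))" by (rule lfp_dual[OF mono_sem])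
  finally show ?case by simp
qed simp_all

lemma fv_dual: "fv (dual p) = fv p" by (induction p) auto
lemma guarded_var_dual: "guarded_var X (dual p) = guarded_var X p" by (induction p) auto
lemma guarded_dual: "guarded (dual p) = guarded p" by (induction p) (auto simp: guarded_var_dual)
lemma cHML_F_dual: "cHML_F p \<Longrightarrow> sHML_F (dual p)" by (induction p) auto
lemma sHML_dual: "sHML p \<Longrightarrow> cHML (dual p)" by (induction p) auto

lemma Dw_Fam: "(\<And>S a. S \<in> Fam \<Longrightarrow> D a S \<in> Fam) \<Longrightarrow> S \<in> Fam \<Longrightarrow> Dw w S \<in> Fam"
  by (induction w arbitrary: S) auto

lemma ok_all:
  assumes h: "\<And>k. g \<in> ok k S" and e: "\<And>w. eps (Dw w S)" and s: "safe S"
  shows "g \<in> S"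
proof (cases g)
  case (FinT l)
  have "Dw l S \<noteq> {}" using h[of "length l"] FinT by (simp add: ok_def)
  then have "FinT [] \<in> Dw l S" using e[of l] by (simp add: eps_def)
  then show ?thesis using FinT by (simp add: Dw_def app_FinT_Nil)
next
  case (InfT f)
  have "\<forall>n. Dw (map f [0..<n]) S \<noteq> {}" using h InfT by (simp add: ok_def)
  then show ?thesis using s InfT by (simp add: safe_def)
qed

lemma boxset_gen: "x \<in> boxset S \<Longrightarrow> \<exists>A p \<tau>. (Box A p, \<tau>) \<in> S \<and> x = sem (Box A p) \<tau>"
proof -
  assume "x \<in> boxset S"
  then obtain q \<tau> where q: "(q, \<tau>) \<in> S" "isbox q" "x = sem q \<tau>" unfolding boxset_def by auto
  then show ?thesis by (cases q) auto
qed

lemma part1: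
  fixes \<phi> :: "('a::finite) form"
  assumes cl: "closed \<phi>" and gd: "guarded \<phi>" and sf: "sHML_F \<phi>"
  shows "\<exists>\<psi>. sHML \<psi> \<and> closed \<psi> \<and> guarded \<psi> \<and> semF \<psi> = semF \<phi>"
proof -
  define \<sigma>0 :: "'a env" where "\<sigma>0 = (\<lambda>_. {})"
  define Bs where "Bs = boxset (R \<phi> \<sigma>0)"
  define Fam where "Fam = Lat Bs"
  have fin: "finite Fam" unfolding Fam_def Bs_def by (intro Lat_finite boxset_finite R_finite)
  have inR: "sem q \<tau> \<in> Fam" if "(q, \<tau>) \<in> R \<phi> \<sigma>0" for q \<tau>
    unfolding Fam_def
    by (rule main_lemma[OF sf gd _ _ that]) (use cl in \<open>auto simp: closed_def Bs_def\<close>)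
  have S0: "semF \<phi> \<in> Fam" unfolding semF_def using inR[OF R_self] by (simp add: \<sigma>0_def)
  have DF: "D a S \<in> Fam" if "S \<in> Fam" for S a
    unfolding Fam_def
  proof (rule Lat_D[of Bs a S])
    fix x assume "x \<in> Bs"
    then obtain A p \<tau> where x: "(Box A p, \<tau>) \<in> R \<phi> \<sigma>0" "x = sem (Box A p) \<tau>"
      unfolding Bs_def using boxset_gen by metis
    have "(p, \<tau>) \<in> R \<phi> \<sigma>0" using R_trans[OF x(1)] R_self[of p \<tau>] by auto
    then have "sem p \<tau> \<in> Lat Bs" using inR Fam_def by simp
    then show "D a x \<in> Lat Bs" unfolding x(2) D_Box by (simp add: Lat.univ)
  qed (use that in \<open>simp add: Fam_def\<close>)
  have EPS: "eps S" if "S \<in> Fam" for S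
  proof (rule Lat_pres[of Bs eps S])
    fix x assume "x \<in> Bs"
    then obtain A p \<tau> where x: "(Box A p, \<tau>) \<in> R \<phi> \<sigma>0" "x = sem (Box A p) \<tau>"
      unfolding Bs_def using boxset_gen by metis
    then show "eps x" by (simp add: eps_def)
  qed (use that in \<open>auto simp: eps_def Fam_def\<close>)
  have SAFE: "safe S" if "S \<in> Fam" for S
  proof (rule Lat_pres[of Bs safe S])
    fix x assume "x \<in> Bs"
    then obtain A p \<tau> where x: "(Box A p, \<tau>) \<in> R \<phi> \<sigma>0" "x = sem (Box A p) \<tau>"
      unfolding Bs_def using boxset_gen by metis
    have env: "safe (\<tau> X)" for X
      by (rule R_env[where P=safe, OF safe_sem x(1) sf]) (simp_all add: \<sigma>0_def safe_empty)
    have "sHML_F (Box A p)" using R_sHML_F[OF x(1) sf] .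
    then show "safe x" using x(2) safe_sem env by blast
  qed (use that in \<open>auto simp: safe_UNIV safe_empty safe_Un safe_Int Fam_def\<close>)
  obtain idx :: "'a fintr set \<Rightarrow> nat" and nn where "idx ` Fam = {i. i < nn}" "inj_on idx Fam"
    using finite_imp_inj_to_nat_seg[OF fin] by blast
  note inj = this(2)
  obtain as :: "'a list" where AS: "set as = UNIV" using finite_list[of "UNIV :: 'a set"] by auto
  define \<psi> where "\<psi> = synt (card Fam) idx as (semF \<phi>) {}"
  have "semF \<phi> \<subseteq> sem \<psi> \<sigma>0" unfolding \<psi>_def
    by (rule claim2[OF fin inj DF]) (use S0 in auto)
  moreover have "sem \<psi> \<sigma>0 \<subseteq> semF \<phi>"
  proof
    fix g assume g: "g \<in> sem \<psi> \<sigma>0"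
    have "g \<in> ok k (semF \<phi>)" for k
      using g claim1[OF fin inj DF AS, of "{}" "card Fam" "semF \<phi>" \<sigma>0 k] S0 unfolding \<psi>_def by auto
    moreover have "eps (Dw w (semF \<phi>))" for w using EPS Dw_Fam[OF DF S0] by blast
    ultimately show "g \<in> semF \<phi>" using ok_all SAFE[OF S0] by blast
  qed
  ultimately have "semF \<psi> = semF \<phi>" by (simp add: semF_def \<sigma>0_def)
  moreover have "closed \<psi>" using synt_fv[of "card Fam" idx as "semF \<phi>" "{}"] unfolding \<psi>_def closed_def by simp
  ultimately show ?thesis using synt_sHML synt_guarded \<psi>_def by blast
qed

theorem mainTheorem14:
  fixes \<phi> :: "('a::finite) form"
  assumes "closed \<phi>" and "guarded \<phi>"
  shows "(sHML_F \<phi> \<longrightarrow> (\<exists>\<psi>. sHML \<psi> \<and> closed \<psi> \<and> guarded \<psi> \<and> semF \<psi> = semF \<phi>))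
       \<and> (cHML_F \<phi> \<longrightarrow> (\<exists>\<psi>. cHML \<psi> \<and> closed \<psi> \<and> guarded \<psi> \<and> semF \<psi> = semF \<phi>))"
proof (intro conjI impI)
  assume "sHML_F \<phi>" then show "\<exists>\<psi>. sHML \<psi> \<and> closed \<psi> \<and> guarded \<psi> \<and> semF \<psi> = semF \<phi>"
    using part1 assms by blast
next
  assume c: "cHML_F \<phi>"
  have "closed (dual \<phi>)" "guarded (dual \<phi>)" "sHML_F (dual \<phi>)"
    using assms c by (simp_all add: closed_def fv_dual guarded_dual cHML_F_dual)
  then obtain \<psi> where \<psi>: "sHML \<psi>" "closed \<psi>" "guarded \<psi>" "semF \<psi> = semF (dual \<phi>)"
    using part1 by blast
  have cl: "\<And>p :: 'a form. closed p \<Longrightarrow> sem p (\<lambda>X. - {}) = semF p"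
    unfolding semF_def closed_def by (rule sem_fv) simp
  have "semF (dual \<psi>) = - semF \<psi>" using cl[OF \<psi>(2)] by (simp add: semF_def sem_dual)
  also have "\<dots> = - semF (dual \<phi>)" using \<psi>(4) by simp
  also have "\<dots> = semF \<phi>" using cl[OF assms(1)] by (simp add: semF_def sem_dual)
  finally have "semF (dual \<psi>) = semF \<phi>" .
  moreover have "cHML (dual \<psi>)" "closed (dual \<psi>)" "guarded (dual \<psi>)"
    using \<psi> by (simp_all add: sHML_dual closed_def fv_dual guarded_dual)
  ultimately show "\<exists>\<psi>. cHML \<psi> \<and> closed \<psi> \<and> guarded \<psi> \<and> semF \<psi> = semF \<phi>" by blast
qed


end
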